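(* Let $W_N$ be the Weyl algebra generated by the entries of $N\times N$ matrices $X=\|x_i^j\|$ and $D=\|\partial/\partial x_j^i\|$, which satisfy $X_1X_2=X_2X_1$, $D_1D_2=D_2D_1$, $D_1X_2=X_2D_1+P_{12}$, and let $L=XD$. Then for every integer $n\ge 1$, in $Mat_{N\times N}(\mathbb{C})^{\otimes n}\otimes W_N$, $$L_1(L_2-j_2)\cdots(L_n-j_n)=X_1\cdots X_n\,D_1\cdots D_n,$$ where $j_k=\sum_{i=1}^{k-1}P_{ik}$.
   Context: For a matrix $A$ with entries in an algebra, $A_i=\mathbb{E}\otimes\cdots\otimes A\otimes\cdots\otimes\mathbb{E}$ with $A$ in the $i$-th tensor factor and the identity matrix $\mathbb{E}$ elsewhere. $P_{ik}$ denotes the permutation matrix acting in tensor factors $i$ and $k$, with $P_{kl}^{mn}=\delta_k^n\delta_l^m$. The elements $j_k$ are the images of the Jucys–Murphy elements of $\mathbb{C}[S_n]$. The map sending the generators of $U(\mathbf{gl}_N)$ to the entries of $XD$ embeds $U(\mathbf{gl}_N)$ into $W_N$. *)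

theory Defs
  imports Main
begin

text \<open>Elements of Mat_{N x N}(C)^{tensor n} tensor A are represented as matrices whose rows and
columns are indexed by multi-indices I = (i_1,...,i_n) (lists of length n with entries < N)
and whose entries lie in the (noncommutative) ring A.  Only entries at valid multi-indices
are meaningful; equality is therefore taken on valid multi-indices (teq).\<close>

type_synonym 'a tmat = "nat list \<Rightarrow> nat list \<Rightarrow> 'a"

definition idx :: "nat \<Rightarrow> nat \<Rightarrow> nat list set" where
  "idx N n = {I. length I = n \<and> set I \<subseteq> {..<N}}"

definition teq :: "nat \<Rightarrow> nat \<Rightarrow> 'a tmat \<Rightarrow> 'a tmat \<Rightarrow> bool" where
  "teq N n A B \<longleftrightarrow> (\<forall>I\<in>idx N n. \<forall>J\<in>idx N n. A I J = B I J)"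

definition tmul :: "nat \<Rightarrow> nat \<Rightarrow> 'a::ring_1 tmat \<Rightarrow> 'a tmat \<Rightarrow> 'a tmat" where
  "tmul N n A B = (\<lambda>I K. \<Sum>J\<in>idx N n. A I J * B J K)"

definition tone :: "'a::ring_1 tmat" where
  "tone = (\<lambda>I J. of_bool (I = J))"

definition emb :: "nat \<Rightarrow> nat \<Rightarrow> (nat \<Rightarrow> nat \<Rightarrow> 'a::ring_1) \<Rightarrow> 'a tmat" where
  "emb n k A = (\<lambda>I J. A (I ! k) (J ! k) *
      of_bool (\<forall>m<n. m \<noteq> k \<longrightarrow> I ! m = J ! m))"

text \<open>P_{ik} (0-based positions), with P_{kl}^{mn} = delta_k^n delta_l^m, i.e. the entry
at row (a_i,a_k), column (b_i,b_k) is delta(a_i,b_k) delta(a_k,b_i).\<close>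
definition tperm :: "nat \<Rightarrow> nat \<Rightarrow> nat \<Rightarrow> 'a::ring_1 tmat" where
  "tperm n i k = (\<lambda>I J. of_bool (I ! i = J ! k \<and> I ! k = J ! i \<and>
      (\<forall>m<n. m \<noteq> i \<and> m \<noteq> k \<longrightarrow> I ! m = J ! m)))"

text \<open>Jucys--Murphy element at 0-based position k (= j_{k+1} in 1-based notation):
sum of P_{i,k} over i < k.\<close>
definition jm :: "nat \<Rightarrow> nat \<Rightarrow> 'a::ring_1 tmat" where
  "jm n k = (\<lambda>I J. \<Sum>i<k. tperm n i k I J)"

primrec tprod :: "nat \<Rightarrow> nat \<Rightarrow> (nat \<Rightarrow> 'a::ring_1 tmat) \<Rightarrow> nat \<Rightarrow> 'a tmat" where
  "tprod N n F 0 = tone"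
| "tprod N n F (Suc m) = tmul N n (tprod N n F m) (F m)"

definition mminus :: "'a::ring_1 tmat \<Rightarrow> 'a tmat \<Rightarrow> 'a tmat" where
  "mminus A B = (\<lambda>I J. A I J - B I J)"

definition matmul :: "nat \<Rightarrow> (nat \<Rightarrow> nat \<Rightarrow> 'a::ring_1) \<Rightarrow> (nat \<Rightarrow> nat \<Rightarrow> 'a) \<Rightarrow> nat \<Rightarrow> nat \<Rightarrow> 'a" where
  "matmul N A B = (\<lambda>a b. \<Sum>c<N. A a c * B c b)"

end

theory Submission
  imports Defs
begin

definition madd :: "'a::ring_1 tmat \<Rightarrow> 'a tmat \<Rightarrow> 'a tmat" where
  "madd A B = (\<lambda>I J. A I J + B I J)"
definition R :: "nat \<Rightarrow> nat \<Rightarrow> 'a::ring_1 tmat \<Rightarrow> 'a tmat" where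
  "R N n A = (\<lambda>I J. if I \<in> idx N n \<and> J \<in> idx N n then A I J else 0)"
definition M :: "nat \<Rightarrow> nat \<Rightarrow> 'a::ring_1 tmat \<Rightarrow> 'a tmat \<Rightarrow> 'a tmat" where
  "M N n A B = R N n (tmul N n A B)"
definition jsum :: "nat \<Rightarrow> nat \<Rightarrow> nat \<Rightarrow> 'a::ring_1 tmat" where
  "jsum n m p = (\<lambda>I J. \<Sum>i<p. tperm n i m I J)"

lemma fin_idx: "finite (idx N n)"
  unfolding idx_def using finite_lists_length_eq[of "{..<N}" n] by (simp add: conj_commute)

lemma idx_nth: "I \<in> idx N n \<Longrightarrow> r < n \<Longrightarrow> I ! r < N"
  unfolding idx_def using nth_mem by fastforce

lemma idx_len: "I \<in> idx N n \<Longrightarrow> length I = n"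
  unfolding idx_def by auto

lemma idx_upd: "I \<in> idx N n \<Longrightarrow> c < N \<Longrightarrow> I[k:=c] \<in> idx N n"
  unfolding idx_def using set_update_subset_insert by fastforce

lemma teq_R: "teq N n A B \<longleftrightarrow> R N n A = R N n B"
  by (auto simp: teq_def R_def fun_eq_iff)

lemma tmul_assoc: "tmul N n (tmul N n A B) C = tmul N n A (tmul N n B C)"
proof (rule ext, rule ext)
  fix I K
  have "tmul N n (tmul N n A B) C I K = (\<Sum>J\<in>idx N n. \<Sum>L\<in>idx N n. A I L * B L J * C J K)"
    by (simp add: tmul_def sum_distrib_right)
  also have "\<dots> = (\<Sum>L\<in>idx N n. \<Sum>J\<in>idx N n. A I L * B L J * C J K)"
    by (rule sum.swap)
  also have "\<dots> = tmul N n A (tmul N n B C) I K"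
    by (simp add: tmul_def sum_distrib_left mult.assoc)
  finally show "tmul N n (tmul N n A B) C I K = tmul N n A (tmul N n B C) I K" .
qed

lemma M_R_left: "M N n (R N n A) B = M N n A B"
  unfolding M_def R_def tmul_def by (auto simp: fun_eq_iff intro!: sum.cong)

lemma M_R_right: "M N n A (R N n B) = M N n A B"
  unfolding M_def R_def tmul_def by (auto simp: fun_eq_iff intro!: sum.cong)

lemma R_M: "R N n (M N n A B) = M N n A B"
  unfolding M_def R_def by (auto simp: fun_eq_iff)

lemma M_assoc: "M N n (M N n A B) C = M N n A (M N n B C)"
  by (metis M_def M_R_left M_R_right tmul_assoc)

lemma M_add_right: "M N n A (madd B C) = madd (M N n A B) (M N n A C)"
  unfolding M_def R_def tmul_def madd_def by (auto simp: fun_eq_iff distrib_left sum.distrib)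

lemma M_add_left: "M N n (madd A B) C = madd (M N n A C) (M N n B C)"
  unfolding M_def R_def tmul_def madd_def by (auto simp: fun_eq_iff distrib_right sum.distrib)

lemma M_minus_right: "M N n A (mminus B C) = mminus (M N n A B) (M N n A C)"
  unfolding M_def R_def tmul_def mminus_def
  by (auto simp: fun_eq_iff right_diff_distrib sum_subtractf)

lemma M_zero_right: "M N n A (\<lambda>I J. 0) = (\<lambda>I J. 0)"
  unfolding M_def R_def tmul_def by (auto simp: fun_eq_iff)

lemma M_zero_left: "M N n (\<lambda>I J. 0) A = (\<lambda>I J. 0)"
  unfolding M_def R_def tmul_def by (auto simp: fun_eq_iff)

lemma madd_assoc: "madd (madd A B) C = madd A (madd B C)"
  unfolding madd_def by (simp add: add.assoc)

lemma mminus_madd: "mminus (madd A B) B = A"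
  unfolding madd_def mminus_def by simp

lemma madd_zero: "madd A (\<lambda>I J. 0) = A"
  unfolding madd_def by simp

lemma sum_single:
  assumes "finite S" "x \<in> S" "\<And>y. y \<in> S \<Longrightarrow> y \<noteq> x \<Longrightarrow> f y = 0"
  shows "sum f S = f x"
proof -
  have "sum f S = sum f {x}" by (rule sum.mono_neutral_right) (use assms in auto)
  thus ?thesis by simp
qed

lemma tmul_single:
  assumes "J0 \<in> idx N n" "\<And>J. J \<in> idx N n \<Longrightarrow> A I J * B J K \<noteq> 0 \<Longrightarrow> J = J0"
  shows "tmul N n A B I K = A I J0 * B J0 K"
  unfolding tmul_def by (rule sum_single[OF fin_idx assms(1)]) (use assms(2) in blast)

lemma list_eqI: "length J = n \<Longrightarrow> length J0 = n \<Longrightarrow> (\<And>r. r < n \<Longrightarrow> J ! r = J0 ! r) \<Longrightarrow> J = J0"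
  by (rule nth_equalityI) auto

lemma M_tone_left: "M N n tone A = R N n A"
proof -
  have "tmul N n tone A I K = A I K" if "I \<in> idx N n" for I K
    by (subst tmul_single[OF that]) (auto simp: tone_def of_bool_def split: if_splits)
  thus ?thesis unfolding M_def R_def by (auto simp: fun_eq_iff)
qed

lemma M_tone_right: "M N n A tone = R N n A"
proof -
  have "tmul N n A tone I K = A I K" if "K \<in> idx N n" for I K
    by (subst tmul_single[OF that]) (auto simp: tone_def of_bool_def split: if_splits)
  thus ?thesis unfolding M_def R_def by (auto simp: fun_eq_iff)
qed



lemma nz_ofb1: "(a::'a::ring_1) * of_bool P \<noteq> 0 \<Longrightarrow> P" by (cases P) auto
lemma nz_ofb2: "of_bool P * (a::'a::ring_1) \<noteq> 0 \<Longrightarrow> P" by (cases P) auto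
lemma nz_mulL: "(a::'a::ring_1) * b \<noteq> 0 \<Longrightarrow> a \<noteq> 0" by auto
lemma nz_mulR: "(a::'a::ring_1) * b \<noteq> 0 \<Longrightarrow> b \<noteq> 0" by auto

lemma tmul_emb_emb:
  assumes kn: "k<n" and ln: "l<n" and kl: "k\<noteq>l" and I: "I\<in>idx N n" and K: "K\<in>idx N n"
  shows "tmul N n (emb n k A) (emb n l B) I K
     = A (I!k) (K!k) * B (I!l) (K!l) * of_bool (\<forall>r<n. r\<noteq>k \<and> r\<noteq>l \<longrightarrow> I!r = K!r)"
proof -
  let ?J = "I[k := K!k]"
  have lI: "length I = n" and lK: "length K = n" using I K idx_len by auto
  have J: "?J \<in> idx N n" using idx_upd[OF I idx_nth[OF K kn]] .
  have "tmul N n (emb n k A) (emb n l B) I K = emb n k A I ?J * emb n l B ?J K"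
  proof (rule tmul_single[OF J])
    fix J assume Ji: "J \<in> idx N n" and nz: "emb n k A I J * emb n l B J K \<noteq> 0"
    have c1: "\<forall>m<n. m \<noteq> k \<longrightarrow> I ! m = J ! m"
      using nz_mulL[OF nz] unfolding emb_def by (rule nz_ofb1)
    have c2: "\<forall>m<n. m \<noteq> l \<longrightarrow> J ! m = K ! m"
      using nz_mulR[OF nz] unfolding emb_def by (rule nz_ofb1)
    show "J = ?J"
      by (rule list_eqI[where n=n]) (use c1 c2 kl kn lI idx_len[OF Ji] in \<open>auto simp: nth_list_update\<close>)
  qed
  also have "\<dots> = A (I!k) (K!k) * B (I!l) (K!l) * of_bool (\<forall>r<n. r\<noteq>k \<and> r\<noteq>l \<longrightarrow> I!r = K!r)"
  proof -
    have e1: "(\<forall>m<n. m \<noteq> k \<longrightarrow> I ! m = ?J ! m)" using lI by (auto simp: nth_list_update)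
    have e2: "(\<forall>m<n. m \<noteq> l \<longrightarrow> ?J ! m = K ! m) = (\<forall>r<n. r\<noteq>k \<and> r\<noteq>l \<longrightarrow> I!r = K!r)"
      using lI kn kl by (auto simp: nth_list_update)
    have e3: "?J ! k = K ! k" "?J ! l = I ! l" using lI kn kl by auto
    show ?thesis unfolding emb_def e2 e3 using e1 by (simp add: mult.assoc)
  qed
  finally show ?thesis .
qed

lemma tmul_emb_same:
  assumes kn: "k<n" and I: "I\<in>idx N n" and K: "K\<in>idx N n"
  shows "tmul N n (emb n k A) (emb n k B) I K = emb n k (matmul N A B) I K"
proof (cases "\<forall>m<n. m \<noteq> k \<longrightarrow> I ! m = K ! m")
  case False
  have "tmul N n (emb n k A) (emb n k B) I K = (\<Sum>J\<in>idx N n. 0)"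
    unfolding tmul_def
  proof (rule sum.cong[OF refl])
    fix J assume "J \<in> idx N n"
    show "emb n k A I J * emb n k B J K = 0"
    proof (rule ccontr)
      assume nz: "emb n k A I J * emb n k B J K \<noteq> 0"
      have c1: "\<forall>m<n. m \<noteq> k \<longrightarrow> I ! m = J ! m"
        using nz_mulL[OF nz] unfolding emb_def by (rule nz_ofb1)
      have c2: "\<forall>m<n. m \<noteq> k \<longrightarrow> J ! m = K ! m"
        using nz_mulR[OF nz] unfolding emb_def by (rule nz_ofb1)
      show False using c1 c2 False by auto
    qed
  qed
  moreover have "emb n k (matmul N A B) I K = 0" using False by (auto simp: emb_def)
  ultimately show ?thesis by simp
next
  case True
  have lI: "length I = n" and lK: "length K = n" using I K idx_len by auto
  let ?h = "\<lambda>c. I[k := c]"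
  let ?g = "\<lambda>J. emb n k A I J * emb n k B J K"
  have sub: "?h ` {..<N} \<subseteq> idx N n" using idx_upd[OF I] by auto
  have "tmul N n (emb n k A) (emb n k B) I K = sum ?g (?h ` {..<N})"
    unfolding tmul_def
  proof (rule sum.mono_neutral_right[OF fin_idx sub], rule ballI)
    fix J assume "J \<in> idx N n - ?h ` {..<N}"
    then have Ji: "J \<in> idx N n" and nJ: "J \<notin> ?h ` {..<N}" by auto
    show "?g J = 0"
    proof (rule ccontr)
      assume nz: "?g J \<noteq> 0"
      have c1: "\<forall>m<n. m \<noteq> k \<longrightarrow> I ! m = J ! m"
        using nz_mulL[OF nz] unfolding emb_def by (rule nz_ofb1)
      have "J = ?h (J ! k)"
        by (rule list_eqI[where n=n]) (use c1 kn lI idx_len[OF Ji] in \<open>auto simp: nth_list_update\<close>)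
      moreover have "J ! k < N" using idx_nth[OF Ji kn] .
      ultimately show False using nJ by blast
    qed
  qed
  also have "\<dots> = sum (?g \<circ> ?h) {..<N}"
    by (rule sum.reindex) (use kn lI in \<open>auto simp: inj_on_def dest: arg_cong[where f="\<lambda>xs. xs ! k"]\<close>)
  also have "\<dots> = (\<Sum>c<N. A (I!k) c * B c (K!k))"
  proof (rule sum.cong[OF refl])
    fix c assume "c \<in> {..<N}"
    have e1: "\<forall>m<n. m \<noteq> k \<longrightarrow> I ! m = ?h c ! m" using lI by (auto simp: nth_list_update)
    have e2: "\<forall>m<n. m \<noteq> k \<longrightarrow> ?h c ! m = K ! m" using lI True by (auto simp: nth_list_update)
    show "(?g \<circ> ?h) c = A (I!k) c * B c (K!k)"
      using e1 e2 kn lI by (simp add: emb_def)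
  qed
  also have "\<dots> = emb n k (matmul N A B) I K" using True by (simp add: emb_def matmul_def)
  finally show ?thesis .
qed



lemma nz_ofb: "of_bool P \<noteq> (0::'a::ring_1) \<Longrightarrow> P" by (cases P) auto

lemma tmul_perm_emb_m:
  assumes i: "i<n" and m: "m<n" and im: "i\<noteq>m" and I: "I\<in>idx N n" and K: "K\<in>idx N n"
  shows "tmul N n (tperm n i m) (emb n m D) I K
     = D (I!i) (K!m) * of_bool (I!m = K!i \<and> (\<forall>r<n. r\<noteq>i \<and> r\<noteq>m \<longrightarrow> I!r = K!r))"
proof -
  let ?J = "I[i := I!m, m := I!i]"
  have lI: "length I = n" and lK: "length K = n" using I K idx_len by auto
  have J: "?J \<in> idx N n" using idx_upd[OF idx_upd[OF I idx_nth[OF I m]] idx_nth[OF I i]] .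
  have "tmul N n (tperm n i m) (emb n m D) I K = tperm n i m I ?J * emb n m D ?J K"
  proof (rule tmul_single[OF J])
    fix J assume Ji: "J \<in> idx N n" and nz: "tperm n i m I J * emb n m D J K \<noteq> 0"
    have c1: "I ! i = J ! m \<and> I ! m = J ! i \<and> (\<forall>r<n. r \<noteq> i \<and> r \<noteq> m \<longrightarrow> I ! r = J ! r)"
      using nz_mulL[OF nz] unfolding tperm_def by (rule nz_ofb)
    show "J = ?J"
      by (rule list_eqI[where n=n]) (use c1 im i m lI idx_len[OF Ji] in \<open>auto simp: nth_list_update\<close>)
  qed
  also have "\<dots> = D (I!i) (K!m) * of_bool (I!m = K!i \<and> (\<forall>r<n. r\<noteq>i \<and> r\<noteq>m \<longrightarrow> I!r = K!r))"
  proof -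
    have e1: "I ! i = ?J ! m \<and> I ! m = ?J ! i \<and> (\<forall>r<n. r \<noteq> i \<and> r \<noteq> m \<longrightarrow> I ! r = ?J ! r)"
      using lI i m im by (auto simp: nth_list_update)
    have e2: "(\<forall>r<n. r \<noteq> m \<longrightarrow> ?J ! r = K ! r) = (I!m = K!i \<and> (\<forall>r<n. r\<noteq>i \<and> r\<noteq>m \<longrightarrow> I!r = K!r))"
      using lI i m im by (auto simp: nth_list_update)
    have e3: "?J ! m = I ! i" using lI m by auto
    show ?thesis unfolding emb_def tperm_def e2 e3 using e1 by simp
  qed
  finally show ?thesis .
qed

lemma tmul_emb_perm_i:
  assumes i: "i<n" and m: "m<n" and im: "i\<noteq>m" and I: "I\<in>idx N n" and K: "K\<in>idx N n"
  shows "tmul N n (emb n i D) (tperm n i m) I K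
     = D (I!i) (K!m) * of_bool (I!m = K!i \<and> (\<forall>r<n. r\<noteq>i \<and> r\<noteq>m \<longrightarrow> I!r = K!r))"
proof -
  let ?J = "I[i := K!m]"
  have lI: "length I = n" and lK: "length K = n" using I K idx_len by auto
  have J: "?J \<in> idx N n" using idx_upd[OF I idx_nth[OF K m]] .
  have "tmul N n (emb n i D) (tperm n i m) I K = emb n i D I ?J * tperm n i m ?J K"
  proof (rule tmul_single[OF J])
    fix J assume Ji: "J \<in> idx N n" and nz: "emb n i D I J * tperm n i m J K \<noteq> 0"
    have c1: "\<forall>r<n. r \<noteq> i \<longrightarrow> I ! r = J ! r"
      using nz_mulL[OF nz] unfolding emb_def by (rule nz_ofb1)
    have c2: "J ! i = K ! m \<and> J ! m = K ! i \<and> (\<forall>r<n. r \<noteq> i \<and> r \<noteq> m \<longrightarrow> J ! r = K ! r)"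
      using nz_mulR[OF nz] unfolding tperm_def by (rule nz_ofb)
    show "J = ?J"
      by (rule list_eqI[where n=n]) (use c1 c2 im i m lI idx_len[OF Ji] in \<open>auto simp: nth_list_update\<close>)
  qed
  also have "\<dots> = D (I!i) (K!m) * of_bool (I!m = K!i \<and> (\<forall>r<n. r\<noteq>i \<and> r\<noteq>m \<longrightarrow> I!r = K!r))"
  proof -
    have e1: "\<forall>r<n. r \<noteq> i \<longrightarrow> I ! r = ?J ! r"
      using lI by (auto simp: nth_list_update)
    have e2: "(?J ! i = K ! m \<and> ?J ! m = K ! i \<and> (\<forall>r<n. r \<noteq> i \<and> r \<noteq> m \<longrightarrow> ?J ! r = K ! r))
        = (I!m = K!i \<and> (\<forall>r<n. r\<noteq>i \<and> r\<noteq>m \<longrightarrow> I!r = K!r))"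
      using lI i m im by (auto simp: nth_list_update)
    have e3: "?J ! i = K ! m" "?J ! m = I ! m" using lI i im by auto
    show ?thesis unfolding emb_def tperm_def e2 e3 using e1 by simp
  qed
  finally show ?thesis .
qed

lemma tmul_perm_emb_p:
  assumes i: "i<n" and m: "m<n" and p: "p<n" and im: "i\<noteq>m" and pi: "p\<noteq>i" and pm: "p\<noteq>m"
    and I: "I\<in>idx N n" and K: "K\<in>idx N n"
  shows "tmul N n (tperm n i m) (emb n p D) I K
     = D (I!p) (K!p) * of_bool (I!i = K!m \<and> I!m = K!i \<and> (\<forall>r<n. r\<noteq>i \<and> r\<noteq>m \<and> r\<noteq>p \<longrightarrow> I!r = K!r))"
proof -
  let ?J = "I[i := I!m, m := I!i]"
  have lI: "length I = n" and lK: "length K = n" using I K idx_len by auto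
  have J: "?J \<in> idx N n" using idx_upd[OF idx_upd[OF I idx_nth[OF I m]] idx_nth[OF I i]] .
  have "tmul N n (tperm n i m) (emb n p D) I K = tperm n i m I ?J * emb n p D ?J K"
  proof (rule tmul_single[OF J])
    fix J assume Ji: "J \<in> idx N n" and nz: "tperm n i m I J * emb n p D J K \<noteq> 0"
    have c1: "I ! i = J ! m \<and> I ! m = J ! i \<and> (\<forall>r<n. r \<noteq> i \<and> r \<noteq> m \<longrightarrow> I ! r = J ! r)"
      using nz_mulL[OF nz] unfolding tperm_def by (rule nz_ofb)
    show "J = ?J"
      by (rule list_eqI[where n=n]) (use c1 im i m lI idx_len[OF Ji] in \<open>auto simp: nth_list_update\<close>)
  qed
  also have "\<dots> = D (I!p) (K!p) * of_bool (I!i = K!m \<and> I!m = K!i \<and> (\<forall>r<n. r\<noteq>i \<and> r\<noteq>m \<and> r\<noteq>p \<longrightarrow> I!r = K!r))"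
  proof -
    have e1: "I ! i = ?J ! m \<and> I ! m = ?J ! i \<and> (\<forall>r<n. r \<noteq> i \<and> r \<noteq> m \<longrightarrow> I ! r = ?J ! r)"
      using lI i m im by (auto simp: nth_list_update)
    have e2: "(\<forall>r<n. r \<noteq> p \<longrightarrow> ?J ! r = K ! r) = (I!i = K!m \<and> I!m = K!i \<and> (\<forall>r<n. r\<noteq>i \<and> r\<noteq>m \<and> r\<noteq>p \<longrightarrow> I!r = K!r))"
      using lI i m im pi pm by (auto simp: nth_list_update)
    have e3: "?J ! p = I ! p" using lI pi pm by auto
    show ?thesis unfolding emb_def tperm_def e2 e3 using e1 by simp
  qed
  finally show ?thesis .
qed

lemma tmul_emb_perm_p:
  assumes i: "i<n" and m: "m<n" and p: "p<n" and im: "i\<noteq>m" and pi: "p\<noteq>i" and pm: "p\<noteq>m"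
    and I: "I\<in>idx N n" and K: "K\<in>idx N n"
  shows "tmul N n (emb n p D) (tperm n i m) I K
     = D (I!p) (K!p) * of_bool (I!i = K!m \<and> I!m = K!i \<and> (\<forall>r<n. r\<noteq>i \<and> r\<noteq>m \<and> r\<noteq>p \<longrightarrow> I!r = K!r))"
proof -
  let ?J = "I[p := K!p]"
  have lI: "length I = n" and lK: "length K = n" using I K idx_len by auto
  have J: "?J \<in> idx N n" using idx_upd[OF I idx_nth[OF K p]] .
  have "tmul N n (emb n p D) (tperm n i m) I K = emb n p D I ?J * tperm n i m ?J K"
  proof (rule tmul_single[OF J])
    fix J assume Ji: "J \<in> idx N n" and nz: "emb n p D I J * tperm n i m J K \<noteq> 0"
    have c1: "\<forall>r<n. r \<noteq> p \<longrightarrow> I ! r = J ! r"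
      using nz_mulL[OF nz] unfolding emb_def by (rule nz_ofb1)
    have c2: "J ! i = K ! m \<and> J ! m = K ! i \<and> (\<forall>r<n. r \<noteq> i \<and> r \<noteq> m \<longrightarrow> J ! r = K ! r)"
      using nz_mulR[OF nz] unfolding tperm_def by (rule nz_ofb)
    show "J = ?J"
      by (rule list_eqI[where n=n]) (use c1 c2 im pi pm i m p lI idx_len[OF Ji] in \<open>auto simp: nth_list_update\<close>)
  qed
  also have "\<dots> = D (I!p) (K!p) * of_bool (I!i = K!m \<and> I!m = K!i \<and> (\<forall>r<n. r\<noteq>i \<and> r\<noteq>m \<and> r\<noteq>p \<longrightarrow> I!r = K!r))"
  proof -
    have e1: "\<forall>r<n. r \<noteq> p \<longrightarrow> I ! r = ?J ! r"
      using lI by (auto simp: nth_list_update)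
    have e2: "(?J ! i = K ! m \<and> ?J ! m = K ! i \<and> (\<forall>r<n. r \<noteq> i \<and> r \<noteq> m \<longrightarrow> ?J ! r = K ! r))
        = (I!i = K!m \<and> I!m = K!i \<and> (\<forall>r<n. r\<noteq>i \<and> r\<noteq>m \<and> r\<noteq>p \<longrightarrow> I!r = K!r))"
      using lI i m p im pi pm by (auto simp: nth_list_update)
    have e3: "?J ! p = K ! p" using lI p by auto
    show ?thesis unfolding emb_def tperm_def e2 e3 using e1 by simp
  qed
  finally show ?thesis .
qed


lemma M_ext:
  assumes "\<And>I K. I \<in> idx N n \<Longrightarrow> K \<in> idx N n \<Longrightarrow> tmul N n A B I K = tmul N n C E I K"
  shows "M N n A B = M N n C E"
  using assms unfolding M_def R_def by (auto simp: fun_eq_iff)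

lemma E1:
  assumes c: "\<And>a b c d. a<N \<Longrightarrow> b<N \<Longrightarrow> c<N \<Longrightarrow> d<N \<Longrightarrow> A a b * B c d = B c d * A a b"
    and k: "k<n" and l: "l<n" and kl: "k\<noteq>l"
  shows "M N n (emb n k A) (emb n l B) = M N n (emb n l B) (emb n k A)"
proof (rule M_ext)
  fix I K assume I: "I \<in> idx N n" and K: "K \<in> idx N n"
  have cc: "(\<forall>r<n. r\<noteq>k \<and> r\<noteq>l \<longrightarrow> I!r = K!r) = (\<forall>r<n. r\<noteq>l \<and> r\<noteq>k \<longrightarrow> I!r = K!r)" by auto
  show "tmul N n (emb n k A) (emb n l B) I K = tmul N n (emb n l B) (emb n k A) I K"
    unfolding tmul_emb_emb[OF k l kl I K] tmul_emb_emb[OF l k kl[symmetric] I K] cc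
    using c[OF idx_nth[OF I k] idx_nth[OF K k] idx_nth[OF I l] idx_nth[OF K l]] by simp
qed

lemma E2:
  assumes k: "k<n"
  shows "M N n (emb n k A) (emb n k B) = R N n (emb n k (matmul N A B))"
  using tmul_emb_same[OF k] unfolding M_def R_def by (auto simp: fun_eq_iff)

lemma E3:
  assumes c: "\<And>a b c d. a<N \<Longrightarrow> b<N \<Longrightarrow> c<N \<Longrightarrow> d<N \<Longrightarrow> D a b * X c d = X c d * D a b + of_bool (a = d \<and> c = b)"
    and k: "k<n" and m: "m<n" and km: "k\<noteq>m"
  shows "M N n (emb n k D) (emb n m X) = madd (M N n (emb n m X) (emb n k D)) (R N n (tperm n k m))"
proof -
  have "tmul N n (emb n k D) (emb n m X) I K = tmul N n (emb n m X) (emb n k D) I K + tperm n k m I K"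
    if I: "I \<in> idx N n" and K: "K \<in> idx N n" for I K
  proof -
    have cc: "(\<forall>r<n. r\<noteq>k \<and> r\<noteq>m \<longrightarrow> I!r = K!r) = (\<forall>r<n. r\<noteq>m \<and> r\<noteq>k \<longrightarrow> I!r = K!r)" by auto
    show ?thesis
      unfolding tmul_emb_emb[OF k m km I K] tmul_emb_emb[OF m k km[symmetric] I K] cc
      unfolding c[OF idx_nth[OF I k] idx_nth[OF K k] idx_nth[OF I m] idx_nth[OF K m]]
      by (auto simp: tperm_def distrib_right of_bool_def)
  qed
  thus ?thesis unfolding M_def R_def madd_def by (auto simp: fun_eq_iff)
qed

lemma E4:
  assumes i: "i<n" and m: "m<n" and im: "i\<noteq>m"
  shows "M N n (tperm n i m) (emb n m D) = M N n (emb n i D) (tperm n i m)"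
  by (rule M_ext) (simp add: tmul_perm_emb_m[OF i m im] tmul_emb_perm_i[OF i m im])

lemma E5:
  assumes i: "i<n" and m: "m<n" and p: "p<n" and im: "i\<noteq>m" and pi: "p\<noteq>i" and pm: "p\<noteq>m"
  shows "M N n (tperm n i m) (emb n p D) = M N n (emb n p D) (tperm n i m)"
  by (rule M_ext) (simp add: tmul_perm_emb_p[OF i m p im pi pm] tmul_emb_perm_p[OF i m p im pi pm])

lemma idx2: "a < N \<Longrightarrow> c < N \<Longrightarrow> [a,c] \<in> idx N 2"
  unfolding idx_def by auto

lemma ee2:
  assumes "a<N" "b<N" "c<N" "d<N"
  shows "tmul N 2 (emb 2 0 A) (emb 2 1 B) [a,c] [b,d] = A a b * B c d"
    and "tmul N 2 (emb 2 1 B) (emb 2 0 A) [a,c] [b,d] = B c d * A a b"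
proof -
  have I: "[a,c] \<in> idx N 2" and K: "[b,d] \<in> idx N 2" using idx2 assms by auto
  have z: "(0::nat) < 2" "(1::nat) < 2" "(0::nat) \<noteq> 1" "(1::nat) \<noteq> 0" by auto
  have t: "(\<forall>r<(2::nat). r\<noteq>0 \<and> r\<noteq>1 \<longrightarrow> [a,c]!r = [b,d]!r)" "(\<forall>r<(2::nat). r\<noteq>1 \<and> r\<noteq>0 \<longrightarrow> [a,c]!r = [b,d]!r)"
    by (simp_all add: less_2_cases_iff)
  show "tmul N 2 (emb 2 0 A) (emb 2 1 B) [a,c] [b,d] = A a b * B c d"
    unfolding tmul_emb_emb[where k=0 and n=2 and l=1, OF z(1) z(2) z(3) I K] t by simp
  show "tmul N 2 (emb 2 1 B) (emb 2 0 A) [a,c] [b,d] = B c d * A a b"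
    unfolding tmul_emb_emb[where k=1 and n=2 and l=0, OF z(2) z(1) z(4) I K] t by simp
qed

lemma scal_comm:
  assumes T: "teq N 2 (tmul N 2 (emb 2 0 A) (emb 2 1 A)) (tmul N 2 (emb 2 1 A) (emb 2 0 A))"
    and abcd: "a<N" "b<N" "c<N" "d<N"
  shows "A a b * A c d = A c d * A a b"
proof -
  have I: "[a,c] \<in> idx N 2" and K: "[b,d] \<in> idx N 2" using idx2 abcd by auto
  have "tmul N 2 (emb 2 0 A) (emb 2 1 A) [a,c] [b,d] = tmul N 2 (emb 2 1 A) (emb 2 0 A) [a,c] [b,d]"
    using T[unfolded teq_def, rule_format, OF I K] .
  thus ?thesis unfolding ee2[OF abcd] .
qed

lemma scal_DX:
  assumes T: "teq N 2 (tmul N 2 (emb 2 0 D) (emb 2 1 X))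
                     (\<lambda>I J. tmul N 2 (emb 2 1 X) (emb 2 0 D) I J + tperm 2 0 1 I J)"
    and abcd: "a<N" "b<N" "c<N" "d<N"
  shows "D a b * X c d = X c d * D a b + of_bool (a = d \<and> c = b)"
proof -
  have I: "[a,c] \<in> idx N 2" and K: "[b,d] \<in> idx N 2" using idx2 abcd by auto
  have p: "tperm 2 0 1 [a,c] [b,d] = (of_bool (a = d \<and> c = b) :: 'a)"
    by (simp add: tperm_def less_2_cases_iff)
  have "tmul N 2 (emb 2 0 D) (emb 2 1 X) [a,c] [b,d] = tmul N 2 (emb 2 1 X) (emb 2 0 D) [a,c] [b,d] + tperm 2 0 1 [a,c] [b,d]"
    using T[unfolded teq_def, rule_format, OF I K] .
  thus ?thesis unfolding ee2[OF abcd] p .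
qed


definition Pr :: "nat \<Rightarrow> nat \<Rightarrow> (nat \<Rightarrow> 'a::ring_1 tmat) \<Rightarrow> nat \<Rightarrow> 'a tmat" where
  "Pr N n F p = R N n (tprod N n F p)"

lemma Pr_0: "Pr N n F 0 = R N n tone" by (simp add: Pr_def)

lemma Pr_Suc: "Pr N n F (Suc p) = M N n (Pr N n F p) (F p)"
  by (simp add: Pr_def M_R_left) (simp add: M_def)

lemma jsum_0: "jsum n m 0 = (\<lambda>I J. 0)" by (simp add: jsum_def)
lemma jsum_Suc: "jsum n m (Suc p) = madd (jsum n m p) (tperm n p m)"
  by (simp add: jsum_def madd_def)

lemma jsum_comm:
  assumes "p<m" "m<n" "q \<le> p"
  shows "M N n (jsum n m q) (emb n p D) = M N n (emb n p D) (jsum n m q)"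
  using assms(3)
proof (induction q)
  case 0 then show ?case by (simp add: jsum_0 M_zero_left M_zero_right)
next
  case (Suc q)
  have e5: "M N n (tperm n q m) (emb n p D) = M N n (emb n p D) (tperm n q m)"
    by (rule E5) (use assms Suc.prems in auto)
  show ?case using Suc by (simp add: jsum_Suc M_add_left M_add_right e5)
qed

context
  fixes N n :: nat and X D :: "nat \<Rightarrow> nat \<Rightarrow> 'a::ring_1"
  assumes DDs: "\<And>a b c d. a<N \<Longrightarrow> b<N \<Longrightarrow> c<N \<Longrightarrow> d<N \<Longrightarrow> D a b * D c d = D c d * D a b"
    and DXs: "\<And>a b c d. a<N \<Longrightarrow> b<N \<Longrightarrow> c<N \<Longrightarrow> d<N \<Longrightarrow> D a b * X c d = X c d * D a b + of_bool (a = d \<and> c = b)"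
begin

lemma lemA:
  assumes m: "m<n"
  shows "p \<le> m \<Longrightarrow> M N n (M N n (Pr N n (\<lambda>k. emb n k D) p) (emb n m X)) (emb n m D)
     = madd (M N n (M N n (emb n m X) (Pr N n (\<lambda>k. emb n k D) p)) (emb n m D))
            (M N n (Pr N n (\<lambda>k. emb n k D) p) (jsum n m p))"
proof (induction p)
  case 0
  then show ?case by (simp add: Pr_0 M_R_left M_R_right M_tone_left M_tone_right M_zero_right madd_zero jsum_0)
next
  case (Suc p)
  let ?Q = "Pr N n (\<lambda>k. emb n k D) p"
  let ?Xm = "emb n m X" and ?Dm = "emb n m D" and ?Dp = "emb n p D" and ?P = "tperm n p m"
    and ?J = "jsum n m p"
  have pm: "p < m" using Suc.prems by simp
  have p: "p < n" using pm m by simp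
  have IH: "M N n (M N n ?Q ?Xm) ?Dm = madd (M N n (M N n ?Xm ?Q) ?Dm) (M N n ?Q ?J)"
    using Suc by simp
  have DPS: "Pr N n (\<lambda>k. emb n k D) (Suc p) = M N n ?Q ?Dp" by (simp add: Pr_Suc)
  have e3: "M N n ?Dp ?Xm = madd (M N n ?Xm ?Dp) (R N n ?P)"
    by (rule E3[OF DXs p m]) (use pm in auto)
  have e1: "M N n ?Dp ?Dm = M N n ?Dm ?Dp"
    by (rule E1[OF DDs p m]) (use pm in auto)
  have e4: "M N n ?P ?Dm = M N n ?Dp ?P"
    by (rule E4[OF p m]) (use pm in auto)
  have jc: "M N n ?J ?Dp = M N n ?Dp ?J"
    by (rule jsum_comm[OF pm m]) simp
  have L1: "M N n (M N n (M N n ?Q ?Dp) ?Xm) ?Dm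
      = madd (M N n (M N n ?Q (M N n ?Xm ?Dp)) ?Dm) (M N n (M N n ?Q (R N n ?P)) ?Dm)"
    by (simp only: M_assoc e3 M_add_right M_add_left)
  have T1: "M N n (M N n ?Q (M N n ?Xm ?Dp)) ?Dm
      = madd (M N n (M N n (M N n ?Xm ?Q) ?Dm) ?Dp) (M N n (M N n ?Q ?J) ?Dp)"
  proof -
    have "M N n (M N n ?Q (M N n ?Xm ?Dp)) ?Dm = M N n (M N n ?Q ?Xm) (M N n ?Dp ?Dm)"
      by (simp only: M_assoc)
    also have "\<dots> = M N n (M N n (M N n ?Q ?Xm) ?Dm) ?Dp"
      by (simp only: e1 M_assoc)
    also have "\<dots> = madd (M N n (M N n (M N n ?Xm ?Q) ?Dm) ?Dp) (M N n (M N n ?Q ?J) ?Dp)"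
      by (simp only: IH M_add_left)
    finally show ?thesis .
  qed
  have a: "M N n (M N n (M N n ?Xm ?Q) ?Dm) ?Dp = M N n (M N n ?Xm (M N n ?Q ?Dp)) ?Dm"
  proof -
    have "M N n (M N n (M N n ?Xm ?Q) ?Dm) ?Dp = M N n ?Xm (M N n ?Q (M N n ?Dm ?Dp))"
      by (simp only: M_assoc)
    also have "\<dots> = M N n ?Xm (M N n ?Q (M N n ?Dp ?Dm))" by (simp only: e1)
    also have "\<dots> = M N n (M N n ?Xm (M N n ?Q ?Dp)) ?Dm" by (simp only: M_assoc)
    finally show ?thesis .
  qed
  have b: "M N n (M N n ?Q ?J) ?Dp = M N n (M N n ?Q ?Dp) ?J"
    by (simp only: M_assoc jc)
  have T2: "M N n (M N n ?Q (R N n ?P)) ?Dm = M N n (M N n ?Q ?Dp) ?P"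
    by (simp only: M_assoc M_R_left e4)
  show ?case
    unfolding DPS L1 T1 a b T2 jsum_Suc M_add_right madd_assoc ..
qed

lemma lemK:
  assumes m: "m<n"
  shows "M N n (Pr N n (\<lambda>k. emb n k D) m) (mminus (emb n m (matmul N X D)) (jm n m))
       = M N n (emb n m X) (Pr N n (\<lambda>k. emb n k D) (Suc m))"
proof -
  let ?Q = "Pr N n (\<lambda>k. emb n k D) m"
  have jj: "jm n m = jsum n m m" by (simp add: jm_def jsum_def)
  have "M N n ?Q (emb n m (matmul N X D)) = M N n ?Q (M N n (emb n m X) (emb n m D))"
    by (simp only: E2[OF m] M_R_right)
  also have "\<dots> = madd (M N n (M N n (emb n m X) ?Q) (emb n m D)) (M N n ?Q (jsum n m m))"
    by (simp only: M_assoc[symmetric] lemA[OF m order_refl])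
  finally have L: "M N n ?Q (emb n m (matmul N X D)) = \<dots>" .
  show ?thesis
    unfolding M_minus_right L jj mminus_madd Pr_Suc M_assoc ..
qed

lemma lemMain:
  "m \<le> n \<Longrightarrow> Pr N n (\<lambda>k. mminus (emb n k (matmul N X D)) (jm n k)) m
      = M N n (Pr N n (\<lambda>k. emb n k X) m) (Pr N n (\<lambda>k. emb n k D) m)"
proof (induction m)
  case 0
  then show ?case by (simp add: Pr_0 M_R_left M_R_right M_tone_left)
next
  case (Suc m)
  then have m: "m < n" by simp
  have "Pr N n (\<lambda>k. mminus (emb n k (matmul N X D)) (jm n k)) (Suc m)
     = M N n (M N n (Pr N n (\<lambda>k. emb n k X) m) (Pr N n (\<lambda>k. emb n k D) m))
          (mminus (emb n m (matmul N X D)) (jm n m))"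
    using Suc by (simp add: Pr_Suc)
  also have "\<dots> = M N n (Pr N n (\<lambda>k. emb n k X) m) (M N n (emb n m X) (Pr N n (\<lambda>k. emb n k D) (Suc m)))"
    by (simp only: M_assoc lemK[OF m])
  also have "\<dots> = M N n (Pr N n (\<lambda>k. emb n k X) (Suc m)) (Pr N n (\<lambda>k. emb n k D) (Suc m))"
    by (simp only: M_assoc Pr_Suc[of N n "\<lambda>k. emb n k X"])
  finally show ?case .
qed

end

theorem mainTheorem2:
  fixes N n :: nat
    and X D :: "nat \<Rightarrow> nat \<Rightarrow> 'a::ring_1"
  assumes XX: "teq N 2 (tmul N 2 (emb 2 0 X) (emb 2 1 X)) (tmul N 2 (emb 2 1 X) (emb 2 0 X))"
    and DD: "teq N 2 (tmul N 2 (emb 2 0 D) (emb 2 1 D)) (tmul N 2 (emb 2 1 D) (emb 2 0 D))"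
    and DX: "teq N 2 (tmul N 2 (emb 2 0 D) (emb 2 1 X))
                     (\<lambda>I J. tmul N 2 (emb 2 1 X) (emb 2 0 D) I J + tperm 2 0 1 I J)"
    and n: "1 \<le> n"
  shows "teq N n
           (tprod N n (\<lambda>k. mminus (emb n k (matmul N X D)) (jm n k)) n)
           (tmul N n (tprod N n (\<lambda>k. emb n k X) n) (tprod N n (\<lambda>k. emb n k D) n))"
proof -
  have DDs: "\<And>a b c d. a<N \<Longrightarrow> b<N \<Longrightarrow> c<N \<Longrightarrow> d<N \<Longrightarrow> D a b * D c d = D c d * D a b"
    using scal_comm[OF DD] by blast
  have DXs: "\<And>a b c d. a<N \<Longrightarrow> b<N \<Longrightarrow> c<N \<Longrightarrow> d<N \<Longrightarrow> D a b * X c d = X c d * D a b + of_bool (a = d \<and> c = b)"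
    using scal_DX[OF DX] by blast
  have "Pr N n (\<lambda>k. mminus (emb n k (matmul N X D)) (jm n k)) n
      = M N n (Pr N n (\<lambda>k. emb n k X) n) (Pr N n (\<lambda>k. emb n k D) n)"
    using lemMain[OF DDs DXs] by blast
  then show ?thesis
    unfolding teq_R by (simp add: Pr_def M_R_left M_R_right) (simp add: M_def)
qed

end
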